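(* There does not exist an arrangement of lines in $\mathbb{C}\mathbb{P}^2$ defined over $\mathbb{R}$ (i.e. each line is the zero set of a linear form with real coefficients) which supports a $4$-net structure.
   Context: Let $\overline{\mathcal{A}}$ be a finite arrangement of lines in $\mathbb{C}\mathbb{P}^2$. A $4$-net (i.e. a $(4,d)$-net, $d\ge2$) on $\overline{\mathcal{A}}$ is a partition $\overline{\mathcal{A}}=\overline{\mathcal{A}}_1\sqcup\overline{\mathcal{A}}_2\sqcup\overline{\mathcal{A}}_3\sqcup\overline{\mathcal{A}}_4$ together with a set $\mathcal{X}\subset\mathbb{C}\mathbb{P}^2$ of points such that: (i) $|\overline{\mathcal{A}}_1|=\dots=|\overline{\mathcal{A}}_4|=d$; (ii) if $\overline{H}\in\overline{\mathcal{A}}_i$, $\overline{H}'\in\overline{\mathcal{A}}_j$ with $i\neq j$, then $\overline{H}\cap\overline{H}'\in\mathcal{X}$; (iii) for every $p\in\mathcal{X}$ and every $i$, exactly one line of $\overline{\mathcal{A}}_i$ passes through $p$; (iv) for any $\overline{H},\overline{H}'\in\overline{\mathcal{A}}_i$ there is a sequence $\overline{H}=\overline{H}'_0,\overline{H}'_1,\dots,\overline{H}'_r=\overline{H}'$ in $\overline{\mathcal{A}}_i$ with $\overline{H}'_{j-1}\cap\overline{H}'_j\notin\mathcal{X}$ for $1\le j\le r$. *)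

theory Defs
  imports Complex_Main
begin

type_synonym cvec = "complex \<times> complex \<times> complex"

definition cscale :: "complex \<Rightarrow> cvec \<Rightarrow> cvec" where
  "cscale c v = (case v of (x, y, z) \<Rightarrow> (c * x, c * y, c * z))"

definition proj_pt :: "cvec \<Rightarrow> cvec set" where
  "proj_pt v = {cscale c v | c. c \<noteq> 0}"

definition CP2 :: "cvec set set" where
  "CP2 = {proj_pt v | v. v \<noteq> (0, 0, 0)}"

definition proj_line :: "cvec \<Rightarrow> cvec set set" where
  "proj_line f = {p \<in> CP2. \<forall>v\<in>p. (case f of (a, b, c) \<Rightarrow> case v of (x, y, z) \<Rightarrow>
        a * x + b * y + c * z = 0)}"

definition real_line :: "cvec set set \<Rightarrow> bool" where
  "real_line L \<longleftrightarrow> (\<exists>a b c :: real. (a, b, c) \<noteq> (0, 0, 0) \<and>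
      L = proj_line (complex_of_real a, complex_of_real b, complex_of_real c))"

definition is_4net ::
  "cvec set set set \<Rightarrow> (nat \<Rightarrow> cvec set set set) \<Rightarrow> cvec set set \<Rightarrow> nat \<Rightarrow> bool" where
  "is_4net Arr A X d \<longleftrightarrow>
     d \<ge> 2 \<and> X \<subseteq> CP2 \<and>
     Arr = (\<Union>i\<in>{1..4}. A i) \<and>
     (\<forall>i\<in>{1..4}. \<forall>j\<in>{1..4}. i \<noteq> j \<longrightarrow> A i \<inter> A j = {}) \<and>
     (\<forall>i\<in>{1..4}. card (A i) = d) \<and>
     (\<forall>i\<in>{1..4}. \<forall>j\<in>{1..4}. \<forall>H\<in>A i. \<forall>H'\<in>A j. i \<noteq> j \<longrightarrow> H \<inter> H' \<subseteq> X) \<and>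
     (\<forall>p\<in>X. \<forall>i\<in>{1..4}. \<exists>!H. H \<in> A i \<and> p \<in> H) \<and>
     (\<forall>i\<in>{1..4}. \<forall>H\<in>A i. \<forall>H'\<in>A i.
        (H, H') \<in> {(K, K'). K \<in> A i \<and> K' \<in> A i \<and> \<not> (K \<inter> K' \<subseteq> X)}\<^sup>*)"

end

theory Submission
  imports Defs "HOL-Computational_Algebra.Polynomial"
begin


type_synonym rvec = "real \<times> real \<times> real"

fun rdot :: "rvec \<Rightarrow> rvec \<Rightarrow> real" where
  "rdot (a,b,c) (x,y,z) = a*x+b*y+c*z"
fun rcross :: "rvec \<Rightarrow> rvec \<Rightarrow> rvec" where
  "rcross (a,b,c) (x,y,z) = (b*z - c*y, c*x - a*z, a*y - b*x)"
fun cx :: "rvec \<Rightarrow> cvec" where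
  "cx (a,b,c) = (complex_of_real a, complex_of_real b, complex_of_real c)"
fun rsc :: "real \<Rightarrow> rvec \<Rightarrow> rvec" where
  "rsc k (a,b,c) = (k*a,k*b,k*c)"

lemma cscale_mult: "cscale a (cscale b v) = cscale (a*b) v"
  by (cases v) (simp add: cscale_def mult.assoc)

lemma cscale_one: "cscale 1 v = v"
  by (cases v) (simp add: cscale_def)

lemma pt_scale: assumes "k \<noteq> 0" shows "proj_pt (cscale k v) = proj_pt v"
proof -
  have "cscale c (cscale k v) \<in> proj_pt v" if "c \<noteq> 0" for c
    using that assms by (auto simp: proj_pt_def cscale_mult)
  moreover have "cscale c v \<in> proj_pt (cscale k v)" if "c \<noteq> 0" for c
  proof -
    have "cscale c v = cscale (c/k) (cscale k v)" using assms by (simp add: cscale_mult)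
    thus ?thesis using that assms unfolding proj_pt_def by auto
  qed
  ultimately show ?thesis unfolding proj_pt_def by blast
qed

lemma pt_in_CP2: "v \<noteq> (0,0,0) \<Longrightarrow> proj_pt v \<in> CP2"
  unfolding CP2_def by blast

lemma cx_nz: "x \<noteq> (0,0,0) \<Longrightarrow> cx x \<noteq> (0,0,0)"
  by (cases x) auto

lemma on_line:
  assumes "x \<noteq> (0,0,0)"
  shows "proj_pt (cx x) \<in> proj_line (cx n) \<longleftrightarrow> rdot n x = 0"
proof -
  obtain x1 x2 x3 where x: "x = (x1,x2,x3)" by (cases x)
  obtain n1 n2 n3 where n: "n = (n1,n2,n3)" by (cases n)
  have key: "complex_of_real n1 * (c * complex_of_real x1) + complex_of_real n2 * (c * complex_of_real x2) +
      complex_of_real n3 * (c * complex_of_real x3) = c * complex_of_real (n1*x1+n2*x2+n3*x3)" for c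
    by (simp add: algebra_simps)
  show ?thesis
  proof
    assume "proj_pt (cx x) \<in> proj_line (cx n)"
    moreover have "cscale 1 (cx x) \<in> proj_pt (cx x)" unfolding proj_pt_def by auto
    ultimately have "complex_of_real n1 * (1 * complex_of_real x1) + complex_of_real n2 * (1 * complex_of_real x2) +
      complex_of_real n3 * (1 * complex_of_real x3) = 0"
      unfolding proj_line_def x n cscale_one by (auto dest!: bspec[where x="(complex_of_real x1, complex_of_real x2, complex_of_real x3)"])
    thus "rdot n x = 0" using key[of 1] by (simp add: x n del: of_real_add of_real_mult)
  next
    assume h: "rdot n x = 0"
    have "proj_pt (cx x) \<in> CP2" using pt_in_CP2 cx_nz assms by blast
    thus "proj_pt (cx x) \<in> proj_line (cx n)"
      using h key by (auto simp: proj_pt_def x n cscale_def proj_line_def)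
  qed
qed

lemma line_scale:
  assumes "k \<noteq> 0" shows "proj_line (cx (rsc k n)) = proj_line (cx n)"
proof -
  obtain n1 n2 n3 where n: "n = (n1,n2,n3)" by (cases n)
  have "complex_of_real (k*n1) * a + complex_of_real (k*n2) * b + complex_of_real (k*n3) * c = 0
     \<longleftrightarrow> complex_of_real n1 * a + complex_of_real n2 * b + complex_of_real n3 * c = 0" for a b c
  proof -
    have "complex_of_real (k*n1) * a + complex_of_real (k*n2) * b + complex_of_real (k*n3) * c
       = complex_of_real k * (complex_of_real n1 * a + complex_of_real n2 * b + complex_of_real n3 * c)"
      by (simp add: algebra_simps)
    thus ?thesis using assms by simp
  qed
  thus ?thesis unfolding proj_line_def n by (simp split: prod.splits)
qed

lemma sumsq_pos:
  assumes "(a,b,c) \<noteq> (0,0,0)" shows "a*a+b*b+c*c > (0::real)"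
proof -
  have "a*a \<ge> 0" "b*b\<ge>0" "c*c\<ge>0" by simp_all
  moreover have "a*a>0 \<or> b*b>0 \<or> c*c>0" using assms by (auto simp: zero_less_mult_iff linorder_neq_iff)
  ultimately show ?thesis by linarith
qed

lemma real_rep:
  assumes p: "p \<in> CP2" and hn: "p \<in> proj_line (cx n)" and hm: "p \<in> proj_line (cx m)"
    and c: "rcross n m \<noteq> (0,0,0)"
  shows "p = proj_pt (cx (rcross n m))"
proof -
  obtain v where v0: "v \<noteq> (0,0,0)" and pv: "p = proj_pt v" using p unfolding CP2_def by blast
  obtain v1 v2 v3 where v: "v = (v1,v2,v3)" by (cases v)
  obtain n1 n2 n3 where n: "n = (n1,n2,n3)" by (cases n)
  obtain m1 m2 m3 where m: "m = (m1,m2,m3)" by (cases m)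
  have vp: "v \<in> p" unfolding pv proj_pt_def mem_Collect_eq
    by (intro exI[of _ 1]) (simp add: cscale_one)
  have en: "complex_of_real n1 * v1 + complex_of_real n2 * v2 + complex_of_real n3 * v3 = 0"
    using hn vp unfolding proj_line_def n v by auto
  have em: "complex_of_real m1 * v1 + complex_of_real m2 * v2 + complex_of_real m3 * v3 = 0"
    using hm vp unfolding proj_line_def m v by auto
  define c1 where "c1 = n2*m3 - n3*m2"
  define c2 where "c2 = n3*m1 - n1*m3"
  define c3 where "c3 = n1*m2 - n2*m1"
  have cc: "rcross n m = (c1,c2,c3)" by (simp add: n m c1_def c2_def c3_def)
  have cpos: "c1^2+c2^2+c3^2 > 0" using c cc sumsq_pos[of c1 c2 c3] by (simp add: power2_eq_square)
  define C where "C = complex_of_real (c1^2+c2^2+c3^2)"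
  define L where "L = v1 * complex_of_real c1 + v2 * complex_of_real c2 + v3 * complex_of_real c3"
  have C0: "C \<noteq> 0" unfolding C_def of_real_eq_0_iff using cpos by linarith
  have C': "C = complex_of_real c1 ^2 + complex_of_real c2 ^2 + complex_of_real c3^2" unfolding C_def by simp
  have C1: "complex_of_real c1 = complex_of_real n2 * complex_of_real m3 - complex_of_real n3 * complex_of_real m2"
    unfolding c1_def by simp
  have C2: "complex_of_real c2 = complex_of_real n3 * complex_of_real m1 - complex_of_real n1 * complex_of_real m3"
    unfolding c2_def by simp
  have C3: "complex_of_real c3 = complex_of_real n1 * complex_of_real m2 - complex_of_real n2 * complex_of_real m1"
    unfolding c3_def by simp
  have i1: "v1 * C = L * complex_of_real c1" unfolding C' L_def C1 C2 C3 using en em by algebra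
  have i2: "v2 * C = L * complex_of_real c2" unfolding C' L_def C1 C2 C3 using en em by algebra
  have i3: "v3 * C = L * complex_of_real c3" unfolding C' L_def C1 C2 C3 using en em by algebra
  define lam where "lam = L / C"
  have vv: "v = cscale lam (cx (rcross n m))"
    unfolding v cc lam_def cscale_def using i1 i2 i3 C0
    by (simp add: field_simps)
  have "lam \<noteq> 0" using vv v0 by (auto simp: cscale_def cc)
  thus ?thesis using pv vv pt_scale by simp
qed

lemma par:
  fixes u c :: rvec
  assumes "rcross u c = (0,0,0)" "c \<noteq> (0,0,0)"
  shows "u = rsc (rdot u c / rdot c c) c" and "rdot c c > 0"
proof -
  obtain u1 u2 u3 where u: "u = (u1,u2,u3)" by (cases u)
  obtain c1 c2 c3 where c: "c = (c1,c2,c3)" by (cases c)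
  have e: "u2*c3 - u3*c2 = 0" "u3*c1 - u1*c3 = 0" "u1*c2 - u2*c1 = 0" using assms(1) by (auto simp: u c)
  show cpos: "rdot c c > 0" using assms(2) sumsq_pos[of c1 c2 c3] unfolding c by simp
  have i1: "u1 * (c1*c1+c2*c2+c3*c3) = (u1*c1+u2*c2+u3*c3) * c1" using e by algebra
  have i2: "u2 * (c1*c1+c2*c2+c3*c3) = (u1*c1+u2*c2+u3*c3) * c2" using e by algebra
  have i3: "u3 * (c1*c1+c2*c2+c3*c3) = (u1*c1+u2*c2+u3*c3) * c3" using e by algebra
  show "u = rsc (rdot u c / rdot c c) c" using cpos i1 i2 i3 unfolding u c
    by (simp add: field_simps)
qed

lemma cross_perp:
  assumes "rdot n x = 0" "rdot n y = 0"
  shows "rcross n (rcross x y) = (0,0,0)"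
proof -
  obtain a b c where n: "n = (a,b,c)" by (cases n)
  obtain x1 x2 x3 where x: "x = (x1,x2,x3)" by (cases x)
  obtain y1 y2 y3 where y: "y = (y1,y2,y3)" by (cases y)
  have e: "a*x1+b*x2+c*x3 = 0" "a*y1+b*y2+c*y3 = 0" using assms by (simp_all add: n x y)
  have "b * (x1 * y2 - x2 * y1) - c * (x3 * y1 - x1 * y3) = 0" using e by algebra
  moreover have "c * (x2 * y3 - x3 * y2) - a * (x1 * y2 - x2 * y1) = 0" using e by algebra
  moreover have "a * (x3 * y1 - x1 * y3) - b * (x2 * y3 - x3 * y2) = 0" using e by algebra
  ultimately show ?thesis by (simp add: n x y)
qed

lemma rsc_zero: "rsc 0 c = (0,0,0)" by (cases c) simp
lemma rsc_mult: "rsc a (rsc b c) = rsc (a*b) c" by (cases c) (simp add: mult.assoc)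

lemma two_points_same_line:
  assumes "n \<noteq> (0,0,0)" "m \<noteq> (0,0,0)" "rdot n x = 0" "rdot n y = 0" "rdot m x = 0" "rdot m y = 0"
    "rcross x y \<noteq> (0,0,0)"
  shows "proj_line (cx m) = proj_line (cx n)"
proof -
  let ?c = "rcross x y"
  have n: "n = rsc (rdot n ?c / rdot ?c ?c) ?c" using par cross_perp assms by blast
  have m: "m = rsc (rdot m ?c / rdot ?c ?c) ?c" using par cross_perp assms by blast
  define a where "a = rdot n ?c / rdot ?c ?c"
  define b where "b = rdot m ?c / rdot ?c ?c"
  have a0: "a \<noteq> 0"
  proof
    assume "a = 0"
    hence "n = (0,0,0)" using n rsc_zero unfolding a_def by metis
    thus False using assms(1) by simp
  qed
  have b0: "b \<noteq> 0"
  proof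
    assume "b = 0"
    hence "m = (0,0,0)" using m rsc_zero unfolding b_def by metis
    thus False using assms(2) by simp
  qed
  have "m = rsc (b/a) n"
  proof -
    have "rsc (b/a) n = rsc (b/a) (rsc a ?c)" using n unfolding a_def by simp
    also have "\<dots> = rsc b ?c" using a0 by (simp add: rsc_mult)
    finally show ?thesis using m unfolding b_def by simp
  qed
  thus ?thesis using line_scale a0 b0 by simp
qed

lemma distinct_lines_cross:
  assumes "n \<noteq> (0,0,0)" "m \<noteq> (0,0,0)" "proj_line (cx n) \<noteq> proj_line (cx m)"
  shows "rcross n m \<noteq> (0,0,0)"
proof
  assume h: "rcross n m = (0,0,0)"
  define k where "k = rdot n m / rdot m m"
  have n: "n = rsc k m" using par h assms unfolding k_def by blast
  have k0: "k \<noteq> 0"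
  proof
    assume "k = 0"
    hence "n = (0,0,0)" using n rsc_zero by simp
    thus False using assms(1) by simp
  qed
  have "proj_line (cx (rsc k m)) = proj_line (cx m)" using line_scale[OF k0] .
  thus False using n assms(3) by simp
qed



lemma select3_raw:
  fixes a b c :: real
  shows "\<bar>b-a\<bar> \<le> \<bar>b\<bar> \<or> \<bar>a-b\<bar> \<le> \<bar>a\<bar> \<or> \<bar>c-a\<bar> \<le> \<bar>c\<bar> \<or> \<bar>a-c\<bar> \<le> \<bar>a\<bar> \<or> \<bar>c-b\<bar> \<le> \<bar>c\<bar> \<or> \<bar>b-c\<bar> \<le> \<bar>b\<bar>"
  by arith

lemma select3:
  fixes u :: "nat \<Rightarrow> real"
  shows "\<exists>k<3. \<exists>m<3. k \<noteq> m \<and> \<bar>u m - u k\<bar> \<le> \<bar>u m\<bar>"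
proof -
  have "\<bar>u 1 - u 0\<bar> \<le> \<bar>u 1\<bar> \<or> \<bar>u 0 - u 1\<bar> \<le> \<bar>u 0\<bar> \<or> \<bar>u 2 - u 0\<bar> \<le> \<bar>u 2\<bar> \<or> \<bar>u 0 - u 2\<bar> \<le> \<bar>u 0\<bar> \<or> \<bar>u 2 - u 1\<bar> \<le> \<bar>u 2\<bar> \<or> \<bar>u 1 - u 2\<bar> \<le> \<bar>u 1\<bar>"
    by (rule select3_raw)
  moreover have "(0::nat)<3" "(1::nat)<3" "(2::nat)<3" "(0::nat)\<noteq>1" "(1::nat)\<noteq>0" "(0::nat)\<noteq>2" "(2::nat)\<noteq>0" "(1::nat)\<noteq>2" "(2::nat)\<noteq>1" by simp_all
  ultimately show ?thesis by blast
qed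

lemma kelly_core:
  fixes A B C p1 p2 q1 q2 s1 s2 Am Bm Cm :: real
  assumes lq: "A*q1+B*q2+C = 0" and ls: "A*s1+B*s2+C = 0" and lp: "A*p1+B*p2+C \<noteq> 0"
    and qs: "(q1,q2) \<noteq> (s1,s2)" and gnz: "(Am,Bm,Cm) \<noteq> (0,0,0)"
    and gp: "Am*p1+Bm*p2+Cm = 0" and gs: "Am*s1+Bm*s2+Cm = 0"
    and sel: "\<bar>(A*(s2-p2) - B*(s1-p1)) - (A*(q2-p2) - B*(q1-p1))\<bar> \<le> \<bar>A*(s2-p2) - B*(s1-p1)\<bar>"
  shows "Am*q1+Bm*q2+Cm \<noteq> 0 \<and> (Am*q1+Bm*q2+Cm)^2/(Am^2+Bm^2) < (A*p1+B*p2+C)^2/(A^2+B^2)"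
proof -
  define h where "h = A*p1+B*p2+C"
  define a2 where "a2 = A^2+B^2"
  define b where "b = Am^2+Bm^2"
  define E where "E = Am*q1+Bm*q2+Cm"
  define uk where "uk = A*(q2-p2) - B*(q1-p1)"
  define um where "um = A*(s2-p2) - B*(s1-p1)"
  define D where "D = (s1-p1)^2 + (s2-p2)^2"
  define X where "X = (s1-p1)*(q2-p2) - (s2-p2)*(q1-p1)"
  have h0: "h \<noteq> 0" using lp h_def by simp
  have a2pos: "a2 > 0"
  proof (rule ccontr)
    assume "\<not> a2 > 0"
    hence "A = 0 \<and> B = 0" unfolding a2_def by (smt (verit) sum_power2_eq_zero_iff zero_le_power2)
    thus False using lq lp by simp
  qed
  have bpos: "b > 0"
  proof (rule ccontr)
    assume "\<not> b > 0"
    hence "Am = 0 \<and> Bm = 0" unfolding b_def by (smt (verit) sum_power2_eq_zero_iff zero_le_power2)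
    thus False using gp gnz by simp
  qed
  have Dpos: "D > 0"
  proof (rule ccontr)
    assume "\<not> D > 0"
    hence "s1 = p1 \<and> s2 = p2" unfolding D_def by (smt (verit) sum_power2_eq_zero_iff zero_le_power2)
    thus False using ls lp by simp
  qed
  have E': "E = Am*(q1-p1) + Bm*(q2-p2)" unfolding E_def using gp by algebra
  have i1: "D*E^2 = b*X^2" unfolding D_def E' b_def X_def using gp gs by algebra
  have i2: "a2*X = h*(um-uk)" unfolding a2_def X_def h_def um_def uk_def using lq ls by algebra
  have i3: "a2*D = h^2+um^2" unfolding a2_def D_def h_def um_def using ls by algebra
  have sq: "(um-uk)^2 \<le> um^2" using sel unfolding um_def uk_def by (simp add: abs_le_square_iff)
  have lt: "(um-uk)^2 < h^2+um^2" using sq h0 by (smt (verit) zero_less_power2)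
  have Ene: "E \<noteq> 0"
  proof
    assume E0: "E = 0"
    hence "X = 0" using i1 bpos by simp
    hence "um = uk" using i2 h0 by simp
    hence "a2*s1 = a2*q1 \<and> a2*s2 = a2*q2" unfolding a2_def um_def uk_def using lq ls by algebra
    thus False using qs a2pos by simp
  qed
  have key: "E^2*a2 < h^2*b"
  proof -
    have "(E^2*a2)*(a2*D) = a2^2*(D*E^2)" by (simp add: algebra_simps power2_eq_square)
    also have "\<dots> = b*(a2*X)^2" using i1 by (simp add: algebra_simps power2_eq_square)
    also have "\<dots> = b*(h*(um-uk))^2" using i2 by simp
    also have "\<dots> = b*h^2*(um-uk)^2" by (simp add: power_mult_distrib)
    also have "\<dots> < b*h^2*(h^2+um^2)" using lt bpos h0 by simp
    also have "\<dots> = (h^2*b)*(a2*D)" using i3 by simp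
    finally show ?thesis using a2pos Dpos by (simp add: mult_less_cancel_right)
  qed
  have "E^2/b < h^2/a2" using key a2pos bpos by (simp add: field_simps)
  thus ?thesis using Ene unfolding E_def h_def a2_def b_def by simp
qed


fun wdot :: "real \<Rightarrow> rvec \<Rightarrow> real" where
  "wdot r (x1,x2,x3) = x1 + r*x2 + r^2*x3"
fun chart :: "real \<Rightarrow> rvec \<Rightarrow> real \<times> real" where
  "chart r (x1,x2,x3) = (x2 / (x1 + r*x2 + r^2*x3), x3 / (x1 + r*x2 + r^2*x3))"
fun aff :: "real \<Rightarrow> rvec \<Rightarrow> rvec" where
  "aff r (n1,n2,n3) = (n2 - r*n1, n3 - r^2*n1, n1)"
fun ev :: "rvec \<Rightarrow> real \<times> real \<Rightarrow> real" where
  "ev (A,B,C) (y,z) = A*y+B*z+C"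
fun mu2 :: "rvec \<Rightarrow> real \<times> real \<Rightarrow> real" where
  "mu2 (A,B,C) q = (ev (A,B,C) q)^2/(A^2+B^2)"

lemma ev_chart:
  assumes "wdot r x \<noteq> 0" shows "ev (aff r n) (chart r x) = rdot n x / wdot r x"
proof -
  obtain x1 x2 x3 where x: "x = (x1,x2,x3)" by (cases x)
  obtain n1 n2 n3 where n: "n = (n1,n2,n3)" by (cases n)
  have w: "x1 + r*x2 + r^2*x3 \<noteq> 0" using assms x by simp
  define s where "s = x1 + r*x2 + r^2*x3"
  have s0: "s \<noteq> 0" using w s_def by simp
  have "ev (aff r n) (chart r x) = (n2 - r*n1)*(x2/s) + (n3 - r^2*n1)*(x3/s) + n1"
    unfolding x n s_def by simp
  also have "\<dots> = ((n2 - r*n1)*x2 + (n3 - r^2*n1)*x3 + n1*s)/s"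
    using s0 by (simp add: add_divide_distrib)
  also have "(n2 - r*n1)*x2 + (n3 - r^2*n1)*x3 + n1*s = rdot n x"
    unfolding x n s_def by (simp add: algebra_simps power2_eq_square)
  finally show ?thesis unfolding s_def x by simp
qed

lemma aff_nz: "n \<noteq> (0,0,0) \<Longrightarrow> aff r n \<noteq> (0,0,0)"
  by (cases n) auto

lemma chart_par:
  assumes "rcross x y = (0,0,0)" "y \<noteq> (0,0,0)" "wdot r x \<noteq> 0"
  shows "chart r x = chart r y"
proof -
  define l where "l = rdot x y / rdot y y"
  have xy: "x = rsc l y" using par(1)[OF assms(1,2)] l_def by simp
  obtain y1 y2 y3 where y: "y = (y1,y2,y3)" by (cases y)
  have "l * (y1 + r*y2 + r^2*y3) \<noteq> 0" using assms(3) xy y by (simp add: algebra_simps)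
  hence "l \<noteq> 0" "y1 + r*y2 + r^2*y3 \<noteq> 0" by auto
  moreover have "chart r x = ((l*y2)/(l*(y1 + r*y2 + r^2*y3)), (l*y3)/(l*(y1 + r*y2 + r^2*y3)))"
    using xy y by (simp add: algebra_simps)
  ultimately show ?thesis using y by simp
qed

lemma roots_finite:
  assumes "x \<noteq> (0,0,0)" shows "finite {r. wdot r x = 0}"
proof -
  obtain x1 x2 x3 where x: "x = (x1,x2,x3)" by (cases x)
  have "[:x1,x2,x3:] \<noteq> 0" using assms x by auto
  hence "finite {r. poly [:x1,x2,x3:] r = 0}" by (rule poly_roots_finite)
  moreover have "poly [:x1,x2,x3:] r = wdot r x" for r by (simp add: x algebra_simps power2_eq_square)
  ultimately show ?thesis by simp
qed

lemma kelly:
  fixes P :: "real\<times>real" and Q :: "nat \<Rightarrow> real\<times>real" and l :: rvec and g :: "nat \<Rightarrow> rvec"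
  assumes Ql: "\<And>k. k<3 \<Longrightarrow> ev l (Q k) = 0" and Pl: "ev l P \<noteq> 0"
   and Qd: "\<And>k m. k<3 \<Longrightarrow> m<3 \<Longrightarrow> k\<noteq>m \<Longrightarrow> Q k \<noteq> Q m"
   and gnz: "\<And>k. k<3 \<Longrightarrow> g k \<noteq> (0,0,0)" and gP: "\<And>k. k<3 \<Longrightarrow> ev (g k) P = 0"
   and gQ: "\<And>k. k<3 \<Longrightarrow> ev (g k) (Q k) = 0"
  shows "\<exists>k<3. \<exists>m<3. k \<noteq> m \<and> ev (g m) (Q k) \<noteq> 0 \<and> mu2 (g m) (Q k) < mu2 l P"
proof -
  obtain A B C where l: "l = (A,B,C)" by (cases l)
  obtain p1 p2 where P: "P = (p1,p2)" by (cases P)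
  obtain k m where km: "k<3" "m<3" "k\<noteq>m"
    and sel: "\<bar>(A*(snd (Q m)-p2) - B*(fst (Q m)-p1)) - (A*(snd (Q k)-p2) - B*(fst (Q k)-p1))\<bar>
              \<le> \<bar>A*(snd (Q m)-p2) - B*(fst (Q m)-p1)\<bar>"
    using select3[of "\<lambda>k. A*(snd (Q k)-p2) - B*(fst (Q k)-p1)"] by blast
  obtain q1 q2 where q: "Q k = (q1,q2)" by (cases "Q k")
  obtain s1 s2 where s: "Q m = (s1,s2)" by (cases "Q m")
  obtain Am Bm Cm where g: "g m = (Am,Bm,Cm)" by (cases "g m")
  have "Am*q1+Bm*q2+Cm \<noteq> 0 \<and> (Am*q1+Bm*q2+Cm)^2/(Am^2+Bm^2) < (A*p1+B*p2+C)^2/(A^2+B^2)"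
    apply (rule kelly_core)
    using Ql[OF km(1)] Ql[OF km(2)] Pl Qd[OF km] gnz[OF km(2)] gP[OF km(2)] gQ[OF km(2)] sel
    by (simp_all add: l P q s g)
  hence "ev (g m) (Q k) \<noteq> 0 \<and> mu2 (g m) (Q k) < mu2 l P" by (simp add: l P q s g)
  thus ?thesis using km by blast
qed





lemma dot_cross1: "rdot n (rcross n m) = 0"
  by (cases n; cases m) (simp add: algebra_simps)
lemma dot_cross2: "rdot m (rcross n m) = 0"
  by (cases n; cases m) (simp add: algebra_simps)

theorem theorem5p2:
  shows "\<not> (\<exists>Arr A X d. finite Arr \<and> (\<forall>L\<in>Arr. real_line L) \<and> is_4net Arr A X d)"
proof
  assume "\<exists>Arr A X d. finite Arr \<and> (\<forall>L\<in>Arr. real_line L) \<and> is_4net Arr A X d"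
  then obtain Arr A X d where fin: "finite Arr" and rl: "\<forall>L\<in>Arr. real_line L"
    and net: "is_4net Arr A X d" by blast
  note N = net[unfolded is_4net_def]
  have d2: "d \<ge> 2" using N[THEN conjunct1] .
  have XC: "X \<subseteq> CP2" using N[THEN conjunct2, THEN conjunct1] .
  have ArrU: "Arr = (\<Union>i\<in>{1..4}. A i)" using N[THEN conjunct2, THEN conjunct2, THEN conjunct1] .
  have disj0: "\<forall>i\<in>{1..4}. \<forall>j\<in>{1..4}. i \<noteq> j \<longrightarrow> A i \<inter> A j = {}"
    using N[THEN conjunct2, THEN conjunct2, THEN conjunct2, THEN conjunct1] .
  have card0: "\<forall>i\<in>{1..4}. card (A i) = d"
    using N[THEN conjunct2, THEN conjunct2, THEN conjunct2, THEN conjunct2, THEN conjunct1] .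
  have cross0: "\<forall>i\<in>{1..4}. \<forall>j\<in>{1..4}. \<forall>H\<in>A i. \<forall>H'\<in>A j. i \<noteq> j \<longrightarrow> H \<inter> H' \<subseteq> X"
    using N[THEN conjunct2, THEN conjunct2, THEN conjunct2, THEN conjunct2, THEN conjunct2, THEN conjunct1] .
  have uniq0: "\<forall>p\<in>X. \<forall>i\<in>{1..4}. \<exists>!H. H \<in> A i \<and> p \<in> H"
    using N[THEN conjunct2, THEN conjunct2, THEN conjunct2, THEN conjunct2, THEN conjunct2, THEN conjunct2, THEN conjunct1] .
  have disj: "\<And>i j. i\<in>{1..4} \<Longrightarrow> j\<in>{1..4} \<Longrightarrow> i \<noteq> j \<Longrightarrow> A i \<inter> A j = {}"
    using disj0 by blast
  have cardA: "\<And>i. i\<in>{1..4} \<Longrightarrow> card (A i) = d" using card0 by blast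
  have crossX: "\<And>i j H H'. i\<in>{1..4} \<Longrightarrow> j\<in>{1..4} \<Longrightarrow> H\<in>A i \<Longrightarrow> H'\<in>A j \<Longrightarrow> i \<noteq> j \<Longrightarrow> H \<inter> H' \<subseteq> X"
    using cross0 by blast
  have uniq: "\<And>p i. p\<in>X \<Longrightarrow> i\<in>{1..4} \<Longrightarrow> \<exists>!H. H \<in> A i \<and> p \<in> H"
    using uniq0 by blast
  have sub: "\<And>i. i\<in>{1..4} \<Longrightarrow> A i \<subseteq> Arr" using ArrU by blast
  have diffcl: "H \<noteq> H'" if "i\<in>{1..4}" "j\<in>{1..4}" "H\<in>A i" "H'\<in>A j" "i \<noteq> j" for i j H H'
  proof
    assume "H = H'"
    hence "H \<in> A i \<inter> A j" using that by simp
    thus False using disj[OF that(1,2,5)] by simp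
  qed

  define nrm where "nrm L = (SOME n. n \<noteq> (0,0,0) \<and> L = proj_line (cx n))" for L
  have nrm: "nrm L \<noteq> (0,0,0) \<and> L = proj_line (cx (nrm L))" if "L \<in> Arr" for L
  proof -
    have "real_line L" using rl that by (rule bspec)
    then obtain a b c :: real where "(a,b,c) \<noteq> (0,0,0)"
      "L = proj_line (complex_of_real a, complex_of_real b, complex_of_real c)"
      unfolding real_line_def by (elim exE conjE) simp
    hence "\<exists>n. n \<noteq> (0,0,0) \<and> L = proj_line (cx n)" by (intro exI[of _ "(a,b,c)"]) simp
    thus ?thesis unfolding nrm_def by (rule someI_ex)
  qed
  have nz: "nrm L \<noteq> (0,0,0)" if "L \<in> Arr" for L using nrm[OF that] by (rule conjunct1)
  have nrmE: "proj_line (cx (nrm L)) = L" if "L \<in> Arr" for L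
  proof -
    have "L = proj_line (cx (nrm L))" using nrm[OF that] by (rule conjunct2)
    thus ?thesis by (rule sym)
  qed
  have crossnz: "rcross (nrm L) (nrm M) \<noteq> (0,0,0)" if "L\<in>Arr" "M\<in>Arr" "L \<noteq> M" for L M
    apply (rule distinct_lines_cross[OF nz[OF that(1)] nz[OF that(2)]])
    using that(3) nrmE[OF that(1)] nrmE[OF that(2)] by simp
  define mt where "mt L M = proj_pt (cx (rcross (nrm L) (nrm M)))" for L M
  have meet: "mt L M \<in> L \<and> mt L M \<in> M" if "L\<in>Arr" "M\<in>Arr" "L \<noteq> M" for L M
  proof -
    have c0: "rcross (nrm L) (nrm M) \<noteq> (0,0,0)" using crossnz[OF that] .
    have "mt L M \<in> proj_line (cx (nrm L))"
      unfolding mt_def using on_line[OF c0, of "nrm L"] dot_cross1[of "nrm L" "nrm M"] by simp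
    moreover have "mt L M \<in> proj_line (cx (nrm M))"
      unfolding mt_def using on_line[OF c0, of "nrm M"] dot_cross2[of "nrm M" "nrm L"] by simp
    ultimately have "mt L M \<in> proj_line (cx (nrm L))" "mt L M \<in> proj_line (cx (nrm M))" by blast+
    thus ?thesis using nrmE[OF that(1)] nrmE[OF that(2)] by simp
  qed
  have rep: "\<exists>x. x \<noteq> (0,0,0) \<and> p = proj_pt (cx x)" if pX0: "p \<in> X" for p
  proof -
    obtain H1 where H1: "H1 \<in> A 1" "p \<in> H1" using uniq[OF pX0, of 1] by auto
    obtain H2 where H2: "H2 \<in> A 2" "p \<in> H2" using uniq[OF pX0, of 2] by auto
    have ne: "H1 \<noteq> H2" using diffcl[of 1 2 H1 H2] H1 H2 by simp
    have inA: "H1 \<in> Arr" "H2 \<in> Arr" using sub[of 1] sub[of 2] H1 H2 by auto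
    have "p = proj_pt (cx (rcross (nrm H1) (nrm H2)))"
      apply (rule real_rep)
      using XC pX0 H1 H2 nrmE[OF inA(1)] nrmE[OF inA(2)] crossnz[OF inA ne] by auto
    thus ?thesis using crossnz[OF inA ne] by blast
  qed
  define rp where "rp p = (SOME x. x \<noteq> (0,0,0) \<and> p = proj_pt (cx x))" for p
  have rp: "rp p \<noteq> (0,0,0) \<and> p = proj_pt (cx (rp p))" if "p \<in> X" for p
    unfolding rp_def using someI_ex[OF rep[OF that]] .
  have rpnz: "rp p \<noteq> (0,0,0)" if "p \<in> X" for p using rp[OF that] by (rule conjunct1)
  have rpE: "proj_pt (cx (rp p)) = p" if "p \<in> X" for p
  proof -
    have "p = proj_pt (cx (rp p))" using rp[OF that] by (rule conjunct2)
    thus ?thesis by (rule sym)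
  qed
  have mem: "p \<in> L \<longleftrightarrow> rdot (nrm L) (rp p) = 0" if "p \<in> X" "L \<in> Arr" for p L
  proof -
    have "proj_pt (cx (rp p)) \<in> proj_line (cx (nrm L)) \<longleftrightarrow> rdot (nrm L) (rp p) = 0"
      using on_line[OF rpnz[OF that(1)], of "nrm L"] .
    moreover have "proj_pt (cx (rp p)) = p" using rpE[OF that(1)] .
    ultimately show ?thesis using nrmE[OF that(2)] by simp
  qed

  have finX: "finite X"
  proof -
    have "X \<subseteq> (\<lambda>(L,M). mt L M) ` (Arr \<times> Arr)"
    proof
      fix p assume p: "p \<in> X"
      obtain H1 where H1: "H1 \<in> A 1" "p \<in> H1" using uniq[OF p, of 1] by auto
      obtain H2 where H2: "H2 \<in> A 2" "p \<in> H2" using uniq[OF p, of 2] by auto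
      have ne: "H1 \<noteq> H2" using diffcl[of 1 2 H1 H2] H1 H2 by simp
      have inA: "H1 \<in> Arr" "H2 \<in> Arr" using sub[of 1] sub[of 2] H1 H2 by auto
      have "p = mt H1 H2" unfolding mt_def
        apply (rule real_rep)
        using XC p H1 H2 nrmE[OF inA(1)] nrmE[OF inA(2)] crossnz[OF inA ne] by auto
      thus "p \<in> (\<lambda>(L,M). mt L M) ` (Arr \<times> Arr)" using inA by auto
    qed
    thus ?thesis using fin by (meson finite_SigmaI finite_imageI finite_subset)
  qed

  have "finite (\<Union>p\<in>X. {r. wdot r (rp p) = 0})"
  proof (rule finite_UN_I[OF finX])
    fix p assume "p \<in> X"
    thus "finite {r. wdot r (rp p) = 0}" using roots_finite rpnz by simp
  qed
  then obtain r where r: "r \<notin> (\<Union>p\<in>X. {r. wdot r (rp p) = 0})"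
    using ex_new_if_finite[OF infinite_UNIV_char_0] by blast
  have wnz: "wdot r (rp p) \<noteq> 0" if "p \<in> X" for p using r that by blast
  have memc: "p \<in> L \<longleftrightarrow> ev (aff r (nrm L)) (chart r (rp p)) = 0" if "p \<in> X" "L \<in> Arr" for p L
    using mem[OF that] ev_chart[OF wnz[OF that(1)]] wnz[OF that(1)] by simp

  define mu where "mu pL = mu2 (aff r (nrm (snd pL))) (chart r (rp (fst pL)))" for pL
  define S where "S = {pL. fst pL \<in> X \<and> snd pL \<in> Arr \<and> fst pL \<notin> snd pL}"
  have finS: "finite S"
  proof -
    have "S \<subseteq> X \<times> Arr" unfolding S_def by auto
    thus ?thesis using finX fin finite_subset by blast
  qed
  have Sne: "S \<noteq> {}"
  proof -
    have "card (A 1) \<ge> 2" "card (A 2) \<ge> 2" using cardA[of 1] cardA[of 2] d2 by auto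
    hence c1: "card (A 1) \<ge> 2" by simp
    hence fin1: "finite (A 1)" using card.infinite by force
    have "\<not> card (A 1) \<le> Suc 0" using c1 by simp
    hence "\<not> (\<forall>a\<in>A 1. \<forall>b\<in>A 1. a = b)" using card_le_Suc0_iff_eq[OF fin1] by blast
    then obtain H H' where HH: "H \<in> A 1" "H' \<in> A 1" "H \<noteq> H'" by blast
    have "A 2 \<noteq> {}" using \<open>card (A 2) \<ge> 2\<close> by auto
    then obtain K where K: "K \<in> A 2" by blast
    have ne: "H \<noteq> K" using diffcl[of 1 2 H K] HH K by simp
    have inA: "H \<in> Arr" "H' \<in> Arr" "K \<in> Arr" using sub[of 1] sub[of 2] HH K by auto
    have q: "mt H K \<in> H" "mt H K \<in> K" using meet[OF inA(1,3) ne] by auto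
    have qX: "mt H K \<in> X" using crossX[of 1 2 H K] HH K q by auto
    have "mt H K \<notin> H'" using uniq[OF qX, of 1] HH q by auto
    hence "(mt H K, H') \<in> S" unfolding S_def using qX inA by auto
    thus ?thesis by blast
  qed
  obtain p H where pH: "(p,H) \<in> S" and minim: "\<And>z. z \<in> S \<Longrightarrow> mu (p,H) \<le> mu z"
  proof -
    let ?m = "Min (mu ` S)"
    have "?m \<in> mu ` S" using finS Sne by simp
    then obtain z where z: "z \<in> S" "mu z = ?m" by auto
    have "\<And>y. y \<in> S \<Longrightarrow> mu z \<le> mu y" using z finS by simp
    thus ?thesis using that z by (cases z) auto
  qed
  have pX: "p \<in> X" and HA: "H \<in> Arr" and pH': "p \<notin> H" using pH unfolding S_def by auto
  obtain i where i: "i \<in> {1..4}" "H \<in> A i" using HA ArrU by auto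
  define j where "j k = (if k < i - 1 then k+1 else k+2)" for k :: nat
  have j1: "j k \<in> {1..4}" "j k \<noteq> i" if "k < 3" for k using that i(1) unfolding j_def by auto
  have j2: "j k \<noteq> j m" if "k<3" "m<3" "k \<noteq> m" for k m using that i(1) unfolding j_def by auto
  define G where "G k = (THE G. G \<in> A (j k) \<and> p \<in> G)" for k
  have G: "G k \<in> A (j k) \<and> p \<in> G k" if "k<3" for k
    unfolding G_def using theI'[OF uniq[OF pX j1(1)[OF that]]] .
  have GA: "G k \<in> Arr" if "k<3" for k using G[OF that] sub[OF j1(1)[OF that]] by auto
  have GH: "G k \<noteq> H" if "k<3" for k using G[OF that] pH' by auto
  define a where "a k = mt (G k) H" for k
  have a: "a k \<in> G k" "a k \<in> H" if "k<3" for k using meet[OF GA[OF that] HA GH[OF that]] a_def by auto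
  have aX: "a k \<in> X" if "k<3" for k
    using crossX[OF j1(1)[OF that] i(1) _ i(2) j1(2)[OF that]] G[OF that] a[OF that] by auto
  define P where "P = chart r (rp p)"
  define Q where "Q k = chart r (rp (a k))" for k
  define l where "l = aff r (nrm H)"
  define g where "g k = aff r (nrm (G k))" for k
  have Ql: "ev l (Q k) = 0" if "k<3" for k using memc[OF aX[OF that] HA] a[OF that] l_def Q_def by simp
  have Pl: "ev l P \<noteq> 0" using memc[OF pX HA] pH' l_def P_def by simp
  have gnz: "g k \<noteq> (0,0,0)" if "k<3" for k using aff_nz nz[OF GA[OF that]] g_def by simp
  have gP: "ev (g k) P = 0" if "k<3" for k using memc[OF pX GA[OF that]] G[OF that] g_def P_def by simp
  have gQ: "ev (g k) (Q k) = 0" if "k<3" for k using memc[OF aX[OF that] GA[OF that]] a[OF that] g_def Q_def by simp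
  have Qd: "Q k \<noteq> Q m" if km: "k<3" "m<3" "k\<noteq>m" for k m
  proof
    assume QQ: "Q k = Q m"
    have "P \<noteq> Q k" using Pl Ql[OF km(1)] by auto
    have cr: "rcross (rp (a k)) (rp p) \<noteq> (0,0,0)"
    proof
      assume c0: "rcross (rp (a k)) (rp p) = (0,0,0)"
      have "chart r (rp (a k)) = chart r (rp p)"
        using chart_par[OF c0 rpnz[OF pX] wnz[OF aX[OF km(1)]]] .
      thus False using \<open>P \<noteq> Q k\<close> unfolding P_def Q_def by simp
    qed
    have e1: "rdot (nrm (G k)) (rp (a k)) = 0" using mem[OF aX[OF km(1)] GA[OF km(1)]] a[OF km(1)] by simp
    have e2: "rdot (nrm (G k)) (rp p) = 0" using mem[OF pX GA[OF km(1)]] G[OF km(1)] by simp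
    have e4: "rdot (nrm (G m)) (rp p) = 0" using mem[OF pX GA[OF km(2)]] G[OF km(2)] by simp
    have "ev (g m) (Q k) = 0" using gQ[OF km(2)] QQ by simp
    hence "a k \<in> G m" using memc[OF aX[OF km(1)] GA[OF km(2)]] g_def Q_def by simp
    hence e3: "rdot (nrm (G m)) (rp (a k)) = 0" using mem[OF aX[OF km(1)] GA[OF km(2)]] by simp
    have "proj_line (cx (nrm (G m))) = proj_line (cx (nrm (G k)))"
      using two_points_same_line[OF nz[OF GA[OF km(1)]] nz[OF GA[OF km(2)]] e1 e2 e3 e4 cr] .
    hence "G m = G k" using nrmE[OF GA[OF km(1)]] nrmE[OF GA[OF km(2)]] by simp
    moreover have "G m \<noteq> G k"
      by (rule diffcl[OF j1(1)[OF km(2)] j1(1)[OF km(1)] conjunct1[OF G[OF km(2)]] conjunct1[OF G[OF km(1)]] j2[OF km(2) km(1) km(3)[symmetric]]])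
    ultimately show False by simp
  qed
  obtain k m where km: "k<3" "m<3" "k\<noteq>m" and ne: "ev (g m) (Q k) \<noteq> 0"
    and lt: "mu2 (g m) (Q k) < mu2 l P"
    using kelly[of l Q P g, OF Ql Pl Qd gnz gP gQ] by blast
  have "a k \<notin> G m" using memc[OF aX[OF km(1)] GA[OF km(2)]] ne g_def Q_def by simp
  hence "(a k, G m) \<in> S" unfolding S_def using aX[OF km(1)] GA[OF km(2)] by simp
  hence "mu (p,H) \<le> mu (a k, G m)" by (rule minim)
  moreover have "mu (a k, G m) < mu (p,H)" using lt unfolding mu_def g_def Q_def l_def P_def by simp
  ultimately show False by simp
qed


end
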